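(* Let $n\ge r\ge1$ be integers with $n=r$ or $n>r=1$. Then there exists a constant $\kappa'>0$ such that for every $Z\in{\rm St}(n,r)$, \[ {\rm dist}(Z,\mathcal{S}_{+}^{n,r})\le\kappa'\,{\rm dist}(Z,\mathbb{R}_{+}^{n\times r}). \]
   Context: ${\rm St}(n,r):=\{X\in\mathbb{R}^{n\times r}: X^\top X=I_r\}$, $\mathbb{R}_{+}^{n\times r}$ is the cone of entrywise nonnegative $n\times r$ matrices, $\mathcal{S}_{+}^{n,r}:=\mathbb{R}_{+}^{n\times r}\cap{\rm St}(n,r)$, and ${\rm dist}(X,\Omega)=\inf_{Y\in\Omega}\|X-Y\|_F$ (Frobenius norm). *)

theory Defs
  imports "HOL-Analysis.Analysis"
begin

text \<open>Real n x r matrices are represented as real^'r^'n (rows indexed by 'n, columns by 'r).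
  The norm on this type is the Euclidean norm of the vector of row norms, i.e. the Frobenius norm,
  so infdist is the Frobenius distance to a set.\<close>

definition stiefel :: "(real^'r^'n) set" where
  "stiefel = {X. transpose X ** X = mat 1}"

definition nonneg_mats :: "(real^'r^'n) set" where
  "nonneg_mats = {X. \<forall>i j. 0 \<le> X $ i $ j}"

definition nonneg_stiefel :: "(real^'r^'n) set" where
  "nonneg_stiefel = nonneg_mats \<inter> stiefel"

end

theory Submission
  imports Defs
begin

lemma fro_sq: "(norm (M::real^'c^'a))^2 = (\<Sum>i\<in>UNIV. \<Sum>j\<in>UNIV. (M$i$j)^2)"
proof -
  have "(norm M)^2 = (\<Sum>i\<in>UNIV. (norm (M$i))^2)"
    unfolding norm_vec_def L2_set_def by (simp add: sum_nonneg)
  also have "\<dots> = (\<Sum>i\<in>UNIV. \<Sum>j\<in>UNIV. (M$i$j)^2)"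
    unfolding norm_vec_def L2_set_def by (simp add: sum_nonneg)
  finally show ?thesis .
qed

lemma fro_le:
  fixes M :: "real^'c^'a" and M' :: "real^'d^'b"
  assumes "(norm M)^2 \<le> (norm M')^2" shows "norm M \<le> norm M'"
  using assms by (rule power2_le_imp_le) simp

lemma tmm_entry: "(transpose X ** X)$i$j = (\<Sum>k\<in>UNIV. X$k$i * X$k$j)"
  by (simp add: matrix_matrix_mult_def transpose_def)

lemma stiefel_entry: "X \<in> stiefel \<Longrightarrow> (\<Sum>k\<in>UNIV. X$k$i * X$k$j) = (if i = j then 1 else 0)"
proof -
  assume "X \<in> stiefel"
  then have "(transpose X ** X)$i$j = (mat 1 :: real^'a^'a)$i$j" unfolding stiefel_def by simp
  then show ?thesis unfolding tmm_entry by (simp add: mat_def)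
qed

lemma stiefel_norm: "X \<in> stiefel \<Longrightarrow> (norm (X::real^'r^'n))^2 = real CARD('r)"
proof -
  assume X: "X \<in> stiefel"
  have "(norm X)^2 = (\<Sum>j\<in>UNIV. \<Sum>i\<in>UNIV. (X$i$j)^2)" unfolding fro_sq by (rule sum.swap)
  also have "\<dots> = (\<Sum>j\<in>(UNIV::'r set). 1)"
    using stiefel_entry[OF X] by (simp add: power2_eq_square)
  finally show ?thesis by simp
qed

lemma closed_stiefel: "closed (stiefel :: (real^'r^'n) set)"
proof -
  have "stiefel = {X::real^'r^'n. \<forall>i j. (\<Sum>k\<in>UNIV. X$k$i * X$k$j) = (mat 1 :: real^'r^'r)$i$j}"
    unfolding stiefel_def tmm_entry[symmetric] by (simp add: vec_eq_iff)
  also have "closed \<dots>"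
    by (intro closed_Collect_all closed_Collect_eq continuous_intros)
  finally show ?thesis .
qed

lemma closed_nonneg: "closed (nonneg_mats :: (real^'r^'n) set)"
  unfolding nonneg_mats_def
  by (intro closed_Collect_all closed_Collect_le continuous_intros)

lemma sq_orth:
  fixes X :: "real^'r^'n"
  assumes "CARD('n) = CARD('r)" "transpose X ** X = mat 1"
  shows "X ** transpose X = mat 1"
proof -
  have "inj ((*v) X)"
  proof (rule injI)
    fix x y assume "X *v x = X *v y"
    then have "transpose X *v (X *v x) = transpose X *v (X *v y)" by simp
    then show "x = y" using assms(2) by (simp add: matrix_vector_mul_assoc)
  qed
  moreover have "vec.dim (UNIV::(real^'n) set) = vec.dim (UNIV::(real^'r) set)"
    using assms(1) by (simp add: dim_vec_eq)
  ultimately have "surj ((*v) X)"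
    using vec.linear_injective_imp_surjective[OF matrix_vector_mul_linear_gen] by blast
  then obtain B :: "real^'n^'r" where B: "X ** B = mat 1"
    using matrix_right_invertible_surjective by blast
  have "transpose X = transpose X ** (X ** B)" using B by simp
  also have "\<dots> = B" using assms(2) by (simp add: matrix_mul_assoc)
  finally show ?thesis using B by simp
qed


lemma pair_ineq:
  fixes a b p q t :: real
  assumes "max 0 (-a) \<le> p" "max 0 (-b) \<le> q" "t = a + b"
  shows "a ^ 2 \<le> 3 * p ^ 2 + 3 * q ^ 2 + 2 * t ^ 2"
proof -
  have p: "0 \<le> p" "-a \<le> p" and q: "0 \<le> q" "-b \<le> q" using assms by auto
  have z: "0 \<le> p^2" "0 \<le> q^2" "0 \<le> t^2" by auto
  show ?thesis
  proof (cases "a < 0")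
    case True
    have "(-a)^2 \<le> p^2" using True p by (intro power_mono) auto
    then have "a^2 \<le> p^2" by simp
    then show ?thesis using z by linarith
  next
    case False
    show ?thesis
    proof (cases "b < 0")
      case True
      have e: "2*t^2 + 2*b^2 - a^2 = (t+b)^2" using assms(3) by (simp add: power2_eq_square algebra_simps)
      have "0 \<le> (t+b)^2" by simp
      moreover have "(-b)^2 \<le> q^2" using True q by (intro power_mono) auto
      then have "b^2 \<le> q^2" by simp
      ultimately show ?thesis using e z by linarith
    next
      case f2: False
      have "a^2 \<le> t^2" using False f2 assms(3) by (intro power_mono) auto
      then show ?thesis using z by linarith
    qed
  qed
qed

lemma sum_sq_sum_le:
  fixes c :: "'r::finite \<Rightarrow> real"
  shows "(\<Sum>i\<in>UNIV. \<Sum>j\<in>UNIV. c i * c j) = (\<Sum>i\<in>UNIV. c i)^2"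
  by (simp add: power2_eq_square sum_product)

lemma local_lemma:
  fixes W g :: "real^'r^'r"
  assumes W: "transpose W ** W = mat 1"
    and g: "\<And>i j. i \<noteq> j \<Longrightarrow> max 0 (-(W$i$j)) \<le> g$i$j"
  shows "(norm (W - mat 1))^2 \<le> 6 * (norm g)^2 + 2 * (norm (W - mat 1))^4"
proof -
  define A where "A = W - mat 1"
  define s where "s = (\<lambda>i j. \<Sum>k\<in>UNIV. A$k$i * A$k$j)"
  have Wd: "W$i$j = A$i$j + (if i = j then 1 else 0)" for i j
    by (simp add: A_def mat_def)
  have Wentry: "(\<Sum>k\<in>UNIV. W$k$i * W$k$j) = (if i = j then 1 else 0)" for i j
    using W by (auto simp: matrix_matrix_mult_def transpose_def mat_def vec_eq_iff dest!: spec[of _ i])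
  have sym: "A$i$j + A$j$i = - s i j" for i j
  proof -
    have "(\<Sum>k\<in>UNIV. W$k$i * W$k$j) = (\<Sum>k\<in>UNIV. A$k$i * A$k$j + (if k = j then A$k$i else 0)
        + (if k = i then A$k$j else 0) + (if k = i then (if i = j then 1 else 0) else 0))"
      by (intro sum.cong refl) (auto simp: Wd algebra_simps)
    also have "\<dots> = s i j + A$j$i + A$i$j + (if i = j then 1 else 0)"
      by (simp add: sum.distrib s_def)
    finally show ?thesis using Wentry[of i j] by simp
  qed
  have pt: "(A$i$j)^2 \<le> 3*(g$i$j)^2 + 3*(g$j$i)^2 + 2*(s i j)^2" for i j
  proof (cases "i = j")
    case True
    then have "A$i$j = - s i j / 2" using sym[of i j] by simp
    then have "(A$i$j)^2 = (s i j)^2/4" by (simp add: power_divide)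
    moreover have "0 \<le> (g$i$j)^2" "0 \<le> (g$j$i)^2" "0 \<le> (s i j)^2" by auto
    ultimately show ?thesis by linarith
  next
    case False
    show ?thesis
      by (rule pair_ineq[OF _ _ refl, of "A$i$j" "g$i$j" "A$j$i" "g$j$i", unfolded sym power2_minus])
         (use g[of i j] g[of j i] False Wd in auto)
  qed
  have cs: "(s i j)^2 \<le> (\<Sum>k\<in>UNIV. (A$k$i)^2) * (\<Sum>k\<in>UNIV. (A$k$j)^2)" for i j
    unfolding s_def by (rule Cauchy_Schwarz_ineq_sum)
  have nA: "(norm A)^2 = (\<Sum>i\<in>UNIV. \<Sum>k\<in>UNIV. (A$k$i)^2)"
    unfolding fro_sq by (rule sum.swap)
  have "(\<Sum>i\<in>UNIV. \<Sum>j\<in>UNIV. (s i j)^2) \<le> (\<Sum>i\<in>UNIV. \<Sum>j\<in>UNIV. (\<Sum>k\<in>UNIV. (A$k$i)^2) * (\<Sum>k\<in>UNIV. (A$k$j)^2))"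
    by (intro sum_mono cs)
  also have "\<dots> = ((norm A)^2)^2"
    unfolding sum_sq_sum_le nA by simp
  also have "\<dots> = (norm A)^4"
    by (simp add: power2_eq_square power4_eq_xxxx)
  finally have S: "(\<Sum>i\<in>UNIV. \<Sum>j\<in>UNIV. (s i j)^2) \<le> (norm A)^4" .
  have gT: "(\<Sum>i\<in>UNIV. \<Sum>j\<in>UNIV. (g$j$i)^2) = (norm g)^2"
    unfolding fro_sq by (rule sum.swap)
  have "(norm A)^2 \<le> (\<Sum>i\<in>UNIV. \<Sum>j\<in>UNIV. 3*(g$i$j)^2 + 3*(g$j$i)^2 + 2*(s i j)^2)"
    unfolding fro_sq by (intro sum_mono pt)
  also have "\<dots> = 3 * (norm g)^2 + 3 * (norm g)^2 + 2 * (\<Sum>i\<in>UNIV. \<Sum>j\<in>UNIV. (s i j)^2)"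
    by (simp add: sum.distrib sum_distrib_left[symmetric] gT fro_sq)
  finally show ?thesis using S unfolding A_def by simp
qed


lemma fro_trace: "(norm (Y::real^'c^'a))^2 = (\<Sum>j\<in>UNIV. (transpose Y ** Y)$j$j)"
proof -
  have "(norm Y)^2 = (\<Sum>j\<in>UNIV. \<Sum>i\<in>UNIV. (Y$i$j)^2)" unfolding fro_sq by (rule sum.swap)
  then show ?thesis
    by (simp add: matrix_matrix_mult_def transpose_def power2_eq_square)
qed

lemma orth_norm:
  fixes M :: "real^'n^'r" and X :: "real^'c^'n"
  assumes "transpose M ** M = mat 1"
  shows "norm (M ** X) = norm X"
proof -
  have "transpose (M ** X) ** (M ** X) = transpose X ** ((transpose M ** M) ** X)"
    by (simp add: matrix_transpose_mul matrix_mul_assoc)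
  also have "\<dots> = transpose X ** X" using assms by simp
  finally have "(norm (M ** X))^2 = (norm X)^2" unfolding fro_trace by simp
  then show ?thesis by (simp add: power2_eq_iff_nonneg)
qed

lemma negpart_le:
  fixes Z :: "real^'r^'n"
  shows "norm (\<chi> i j. max 0 (-(Z$i$j))) \<le> infdist Z nonneg_mats"
proof -
  have ne: "nonneg_mats \<noteq> ({} :: (real^'r^'n) set)"
  proof -
    have "(0::real^'r^'n) \<in> nonneg_mats" by (simp add: nonneg_mats_def)
    then show ?thesis by blast
  qed
  show ?thesis
    unfolding infdist_notempty[OF ne]
  proof (rule cINF_greatest[OF ne])
    fix W :: "real^'r^'n" assume "W \<in> nonneg_mats"
    then have W: "0 \<le> W$i$j" for i j unfolding nonneg_mats_def by auto
    have "(norm (\<chi> i j. max 0 (-(Z$i$j))))^2 \<le> (norm (Z - W))^2"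
      unfolding fro_sq
    proof (intro sum_mono)
      fix i j
      have h: "max 0 (-(Z$i$j)) \<le> \<bar>(Z - W)$i$j\<bar>" using W[of i j] by auto
      have "(max 0 (-(Z$i$j)))^2 \<le> \<bar>(Z - W)$i$j\<bar>^2" by (rule power_mono[OF h]) auto
      then show "((\<chi> i j. max 0 (-(Z$i$j)))$i$j)^2 \<le> ((Z - W)$i$j)^2" by simp
    qed
    then show "norm (\<chi> i j. max 0 (-(Z$i$j))) \<le> dist Z W"
      unfolding dist_norm by (rule power2_le_imp_le) simp
  qed
qed

lemma square_case_local:
  fixes Z P :: "real^'r^'n"
  assumes card: "CARD('n) = CARD('r)" and Z: "Z \<in> stiefel" and P: "P \<in> nonneg_stiefel"
    and close: "norm (Z - P) \<le> 1/2"
  shows "norm (Z - P) \<le> 4 * infdist Z nonneg_mats"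
proof -
  have Pst: "transpose P ** P = mat 1" and Pnn: "\<And>i j. 0 \<le> P$i$j"
    using P unfolding nonneg_stiefel_def stiefel_def nonneg_mats_def by auto
  have Zst: "transpose Z ** Z = mat 1" using Z unfolding stiefel_def by auto
  have PPt: "P ** transpose P = mat 1" by (rule sq_orth[OF card Pst])
  define M where "M = transpose P"
  have MM: "transpose M ** M = mat 1" using PPt by (simp add: M_def)
  define W where "W = M ** Z"
  define N :: "real^'r^'n" where "N = (\<chi> i j. max 0 (-(Z$i$j)))"
  define g where "g = M ** N"
  have WW: "transpose W ** W = mat 1"
  proof -
    have "transpose W ** W = transpose Z ** ((transpose M ** M) ** Z)"
      by (simp add: W_def matrix_transpose_mul matrix_mul_assoc)
    then show ?thesis using MM Zst by simp
  qed
  have WA: "W - mat 1 = M ** (Z - P)"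
  proof -
    have "M ** (Z - P) = M ** Z - M ** P"
      by (simp add: matrix_matrix_mult_def vec_eq_iff sum_subtractf algebra_simps)
    then show ?thesis using Pst by (simp add: W_def M_def)
  qed
  have gW: "max 0 (-(W$i$j)) \<le> g$i$j" for i j
  proof -
    have "W$i$j + g$i$j = (\<Sum>k\<in>UNIV. P$k$i * (Z$k$j + max 0 (-(Z$k$j))))"
      by (simp add: W_def g_def N_def M_def matrix_matrix_mult_def transpose_def
          sum.distrib[symmetric] algebra_simps)
    also have "\<dots> \<ge> 0" by (intro sum_nonneg mult_nonneg_nonneg Pnn) auto
    finally have 1: "0 \<le> W$i$j + g$i$j" .
    have "0 \<le> g$i$j" unfolding g_def N_def M_def
      by (simp add: matrix_matrix_mult_def transpose_def) (intro sum_nonneg mult_nonneg_nonneg Pnn, auto)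
    with 1 show ?thesis by simp
  qed
  have L: "(norm (W - mat 1))^2 \<le> 6 * (norm g)^2 + 2 * (norm (W - mat 1))^4"
    by (rule local_lemma[OF WW gW])
  have na: "norm (W - mat 1) = norm (Z - P)" unfolding WA by (rule orth_norm[OF MM])
  have ng: "norm g = norm N" unfolding g_def by (rule orth_norm[OF MM])
  define a where "a = norm (Z - P)"
  define d where "d = infdist Z nonneg_mats"
  have nd: "norm N \<le> d" unfolding N_def d_def by (rule negpart_le)
  have a0: "0 \<le> a" "a \<le> 1/2" using close by (auto simp: a_def)
  have L2: "a^2 \<le> 6 * (norm N)^2 + 2 * a^4" using L na ng by (simp add: a_def)
  have "a^4 \<le> a^2 / 4"
  proof -
    have "a^2 \<le> (1/2)^2" using a0 by (intro power_mono) auto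
    then have "a^2 \<le> 1/4" by (simp add: power2_eq_square)
    then have "a^2 * a^2 \<le> (1/4) * a^2" by (intro mult_right_mono) auto
    then show ?thesis by (simp add: power2_eq_square power4_eq_xxxx)
  qed
  moreover have "(norm N)^2 \<le> d^2" using nd by (intro power_mono) auto
  moreover have "0 \<le> d^2" by simp
  ultimately have "a^2 \<le> 16 * d^2" using L2 by linarith
  then have "a^2 \<le> (4*d)^2" by (simp add: power_mult_distrib)
  then have "a \<le> 4 * d"
    by (rule power2_le_imp_le) (simp add: d_def infdist_nonneg)
  then show ?thesis by (simp add: a_def d_def)
qed


lemma stiefel_norm_eq: "X \<in> stiefel \<Longrightarrow> norm (X::real^'r^'n) = sqrt (real CARD('r))"
proof -
  assume "X \<in> stiefel"
  then have "(norm X)^2 = real CARD('r)" by (rule stiefel_norm)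
  then have "sqrt ((norm X)^2) = sqrt (real CARD('r))" by simp
  then show ?thesis by simp
qed

lemma infdist_empty0: "infdist x {} = 0"
  by (simp add: infdist_def)

lemma global_from_local:
  assumes dpos: "\<delta> > 0" and c: "c \<ge> 0"
    and loc: "\<forall>Z::real^'r^'n. Z \<in> stiefel \<longrightarrow> infdist Z nonneg_mats < \<delta> \<longrightarrow>
               infdist Z nonneg_stiefel \<le> c * infdist Z nonneg_mats"
  shows "\<exists>\<kappa>>0. \<forall>Z::real^'r^'n. Z \<in> stiefel \<longrightarrow>
           infdist Z nonneg_stiefel \<le> \<kappa> * infdist Z nonneg_mats"
proof -
  define R where "R = 2 * sqrt (real CARD('r))"
  have R0: "R \<ge> 0" by (simp add: R_def)
  define \<kappa> where "\<kappa> = c + R / \<delta> + 1"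
  have Rd: "R / \<delta> \<ge> 0" using R0 dpos by simp
  have k0: "\<kappa> > 0" unfolding \<kappa>_def using c Rd by linarith
  have ck: "c \<le> \<kappa>" unfolding \<kappa>_def using Rd by linarith
  have Rk: "R / \<delta> \<le> \<kappa>" unfolding \<kappa>_def using c by linarith
  show ?thesis
  proof (intro exI[of _ \<kappa>] conjI k0 allI impI)
    fix Z :: "real^'r^'n" assume Z: "Z \<in> stiefel"
    define d where "d = infdist Z nonneg_mats"
    have d0: "d \<ge> 0" by (simp add: d_def infdist_nonneg)
    have "infdist Z nonneg_stiefel \<le> \<kappa> * d"
    proof (cases "d < \<delta>")
      case True
      then have "infdist Z nonneg_stiefel \<le> c * d" using loc Z by (simp add: d_def)
      also have "\<dots> \<le> \<kappa> * d" by (rule mult_right_mono[OF ck d0])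
      finally show ?thesis .
    next
      case False
      show ?thesis
      proof (cases "nonneg_stiefel = ({} :: (real^'r^'n) set)")
        case True
        then show ?thesis using d0 k0 by (simp add: infdist_empty0)
      next
        case ne: False
        then obtain P :: "real^'r^'n" where P: "P \<in> nonneg_stiefel" by blast
        then have Pst: "P \<in> stiefel" by (simp add: nonneg_stiefel_def)
        have "infdist Z nonneg_stiefel \<le> dist Z P" by (rule infdist_le[OF P])
        also have "\<dots> \<le> norm Z + norm P" by (simp add: dist_norm norm_triangle_ineq4)
        also have "\<dots> = R" using stiefel_norm_eq[OF Z] stiefel_norm_eq[OF Pst] by (simp add: R_def)
        also have "\<dots> = (R / \<delta>) * \<delta>" using dpos by simp
        also have "\<dots> \<le> (R / \<delta>) * d" using False Rd by (intro mult_left_mono) auto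
        also have "\<dots> \<le> \<kappa> * d" by (rule mult_right_mono[OF Rk d0])
        finally show ?thesis .
      qed
    qed
    then show "infdist Z nonneg_stiefel \<le> \<kappa> * infdist Z nonneg_mats" by (simp add: d_def)
  qed
qed

lemma close_point:
  assumes "infdist (Z::real^'r^'n) S < e" "S \<noteq> {}"
  shows "\<exists>P\<in>S. dist Z P < e"
proof -
  have "(INF a\<in>S. dist Z a) < e" using assms(1) unfolding infdist_notempty[OF assms(2)] .
  moreover have "bdd_below ((\<lambda>a. dist Z a) ` S)" by (rule bdd_belowI[where m=0]) auto
  ultimately show ?thesis using cINF_less_iff[OF assms(2)] by blast
qed

lemma square_case:
  assumes card: "CARD('n) = CARD('r)"
  shows "\<exists>\<delta>>0. \<forall>Z::real^'r^'n. Z \<in> stiefel \<longrightarrow> infdist Z nonneg_mats < \<delta> \<longrightarrow>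
               infdist Z nonneg_stiefel \<le> 4 * infdist Z nonneg_mats"
proof (cases "nonneg_stiefel = ({} :: (real^'r^'n) set)")
  case True
  then show ?thesis by (intro exI[of _ 1]) (simp add: infdist_empty0 infdist_nonneg)
next
  case ne: False
  have key: "infdist Z nonneg_stiefel \<le> 4 * infdist Z nonneg_mats"
    if Z: "Z \<in> stiefel" and h: "infdist Z nonneg_stiefel < 1/2" for Z :: "real^'r^'n"
  proof -
    obtain P where P: "P \<in> nonneg_stiefel" and dP: "dist Z P < 1/2"
      using close_point[OF h ne] by blast
    have "infdist Z nonneg_stiefel \<le> dist Z P" by (rule infdist_le[OF P])
    also have "\<dots> \<le> 4 * infdist Z nonneg_mats"
      using square_case_local[OF card Z P] dP by (simp add: dist_norm)
    finally show ?thesis .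
  qed
  define K where "K = (stiefel :: (real^'r^'n) set) \<inter> {Z. 1/2 \<le> infdist Z nonneg_stiefel}"
  have "bounded (stiefel :: (real^'r^'n) set)"
    unfolding bounded_iff by (intro exI[of _ "sqrt (real CARD('r))"]) (simp add: stiefel_norm_eq)
  moreover have "closed {Z::real^'r^'n. 1/2 \<le> infdist Z nonneg_stiefel}"
    by (intro closed_Collect_le continuous_intros)
  ultimately have cK: "compact K"
    unfolding K_def using closed_stiefel compact_eq_bounded_closed bounded_Int closed_Int by blast
  show ?thesis
  proof (cases "K = {}")
    case True
    show ?thesis
    proof (intro exI[of _ 1] conjI allI impI)
      fix Z :: "real^'r^'n" assume Z: "Z \<in> stiefel"
      then have "Z \<notin> K" using True by blast
      then have "infdist Z nonneg_stiefel < 1/2" using Z unfolding K_def by (simp add: not_le)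
      then show "infdist Z nonneg_stiefel \<le> 4 * infdist Z nonneg_mats" by (rule key[OF Z])
    qed simp
  next
    case False
    have "continuous_on K (\<lambda>Z. infdist Z nonneg_mats)" by (intro continuous_intros)
    then obtain Z0 where Z0: "Z0 \<in> K" and min: "\<forall>Z\<in>K. infdist Z0 nonneg_mats \<le> infdist Z nonneg_mats"
      using continuous_attains_inf[OF cK False] by blast
    define \<delta> where "\<delta> = infdist Z0 nonneg_mats"
    have nne: "nonneg_mats \<noteq> ({} :: (real^'r^'n) set)"
    proof -
      have "(0::real^'r^'n) \<in> nonneg_mats" by (simp add: nonneg_mats_def)
      then show ?thesis by blast
    qed
    have dpos: "\<delta> > 0"
    proof (rule ccontr)
      assume "\<not> \<delta> > 0"
      then have "\<delta> = 0" using infdist_nonneg[of Z0 nonneg_mats] by (simp add: \<delta>_def)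
      then have "Z0 \<in> nonneg_mats" using in_closed_iff_infdist_zero[OF closed_nonneg nne] by (simp add: \<delta>_def)
      then have "Z0 \<in> nonneg_stiefel" using Z0 by (simp add: K_def nonneg_stiefel_def)
      then show False using Z0 by (simp add: K_def)
    qed
    show ?thesis
    proof (intro exI[of _ \<delta>] conjI allI impI)
      fix Z :: "real^'r^'n" assume Z: "Z \<in> stiefel" and d: "infdist Z nonneg_mats < \<delta>"
      have "Z \<notin> K"
      proof
        assume "Z \<in> K"
        then have "\<delta> \<le> infdist Z nonneg_mats" using min by (simp add: \<delta>_def)
        then show False using d by simp
      qed
      then have "infdist Z nonneg_stiefel < 1/2" using Z unfolding K_def by (simp add: not_le)
      then show "infdist Z nonneg_stiefel \<le> 4 * infdist Z nonneg_mats" by (rule key[OF Z])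
    qed (rule dpos)
  qed
qed


lemma posneg_sq: "(max 0 (z::real))^2 + (max 0 (-z))^2 = z^2"
  by (cases "z \<ge> 0") (auto simp: max_def)

lemma scaled_sq:
  fixes z a :: real
  shows "(z - max 0 z / a)^2 = (1 - 1/a)^2 * (max 0 z)^2 + (max 0 (-z))^2"
proof (cases "z \<ge> 0")
  case True
  then show ?thesis by (simp add: max_def power_mult_distrib[symmetric] algebra_simps)
next
  case False
  then show ?thesis by (simp add: max_def)
qed

lemma col_case:
  assumes card: "CARD('r) = 1"
  shows "\<forall>Z::real^'r^'n. Z \<in> stiefel \<longrightarrow> infdist Z nonneg_mats < 1 \<longrightarrow>
               infdist Z nonneg_stiefel \<le> 2 * infdist Z nonneg_mats"
proof (intro allI impI)
  fix Z :: "real^'r^'n" assume Z: "Z \<in> stiefel" and dl: "infdist Z nonneg_mats < 1"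
  obtain j0 :: 'r where U: "(UNIV :: 'r set) = {j0}"
    using card card_1_singletonE by (metis One_nat_def)
  have jj: "j = j0" for j :: 'r using U by auto
  define d where "d = infdist Z nonneg_mats"
  define N :: "real^'r^'n" where "N = (\<chi> i j. max 0 (-(Z$i$j)))"
  define Pp :: "real^'r^'n" where "Pp = (\<chi> i j. max 0 (Z$i$j))"
  define a where "a = norm Pp"
  define b where "b = norm N"
  have bd: "b \<le> d" unfolding b_def N_def d_def by (rule negpart_le)
  have d0: "0 \<le> d" by (simp add: d_def infdist_nonneg)
  have ab: "a^2 + b^2 = 1"
  proof -
    have "a^2 + b^2 = (\<Sum>i\<in>UNIV. \<Sum>j\<in>UNIV. (max 0 (Z$i$j))^2 + (max 0 (-(Z$i$j)))^2)"
      unfolding a_def b_def fro_sq Pp_def N_def by (simp add: sum.distrib)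
    also have "\<dots> = (norm Z)^2" unfolding fro_sq posneg_sq ..
    also have "\<dots> = 1" using stiefel_norm[OF Z] card by simp
    finally show ?thesis .
  qed
  have b0: "0 \<le> b" by (simp add: b_def)
  have bl: "b < 1" using bd dl d_def by simp
  have "b^2 < 1^2" by (rule power_strict_mono) (use bl b0 in auto)
  then have "b^2 < 1" by simp
  then have "0 < a^2" using ab by linarith
  then have apos: "0 < a" using a_def by (simp add: zero_less_power2)
  have a1: "a \<le> 1"
  proof -
    have "0 \<le> b^2" by simp
    then have "a^2 \<le> 1" using ab by linarith
    then have "a^2 \<le> 1^2" by simp
    then show ?thesis by (rule power2_le_imp_le) simp
  qed
  define Q :: "real^'r^'n" where "Q = (\<chi> i j. max 0 (Z$i$j) / a)"
  have Qnn: "Q \<in> nonneg_mats" unfolding nonneg_mats_def Q_def using apos by simp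
  have Qst: "Q \<in> stiefel"
  proof -
    have nQ: "(\<Sum>i\<in>UNIV. (Q$i$j0)^2) = 1"
    proof -
      have "(\<Sum>i\<in>UNIV. (Q$i$j0)^2) = (\<Sum>i\<in>UNIV. (max 0 (Z$i$j0))^2) / a^2"
        unfolding Q_def by (simp add: power_divide sum_divide_distrib)
      also have "(\<Sum>i\<in>UNIV. (max 0 (Z$i$j0))^2) = a^2"
        unfolding a_def fro_sq Pp_def by (simp add: U)
      finally show ?thesis using apos by simp
    qed
    have "transpose Q ** Q = mat 1"
    proof (subst vec_eq_iff, intro allI, subst vec_eq_iff, intro allI)
      fix j k :: 'r
      show "(transpose Q ** Q)$j$k = (mat 1 :: real^'r^'r)$j$k"
        unfolding tmm_entry using nQ jj[of j] jj[of k] by (simp add: mat_def power2_eq_square)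
    qed
    then show ?thesis by (simp add: stiefel_def)
  qed
  have QS: "Q \<in> nonneg_stiefel" using Qnn Qst by (simp add: nonneg_stiefel_def)
  have "(norm (Z - Q))^2 = (1 - 1/a)^2 * a^2 + b^2"
  proof -
    have "(norm (Z - Q))^2 = (\<Sum>i\<in>UNIV. \<Sum>j\<in>UNIV. (1 - 1/a)^2 * (max 0 (Z$i$j))^2 + (max 0 (-(Z$i$j)))^2)"
      unfolding fro_sq Q_def by (simp add: scaled_sq)
    also have "\<dots> = (1 - 1/a)^2 * a^2 + b^2"
      unfolding a_def b_def fro_sq Pp_def N_def by (simp add: sum.distrib sum_distrib_left)
    finally show ?thesis .
  qed
  also have "(1 - 1/a)^2 * a^2 = (1 - a)^2"
  proof -
    have "(1 - 1/a)^2 * a^2 = ((1 - 1/a) * a)^2" by (simp add: power_mult_distrib)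
    also have "(1 - 1/a) * a = a - 1" using apos by (simp add: algebra_simps)
    finally show ?thesis by (simp add: power2_commute)
  qed
  also have "(1 - a)^2 \<le> b^2"
  proof -
    have "(1 - a)^2 = (1 - a) * (1 - a)" by (simp add: power2_eq_square)
    also have "\<dots> \<le> (1 - a) * (1 + a)" using a1 apos by (intro mult_left_mono) auto
    also have "\<dots> = 1 - a^2" by (simp add: power2_eq_square algebra_simps)
    finally show ?thesis using ab by simp
  qed
  finally have "(norm (Z - Q))^2 \<le> b^2 + b^2" by simp
  also have "\<dots> \<le> (2*d)^2"
  proof -
    have "b^2 \<le> d^2" using bd b0 by (intro power_mono) auto
    moreover have "0 \<le> d^2" by simp
    moreover have "(2*d)^2 = 4 * d^2" by (simp add: power_mult_distrib)
    ultimately show ?thesis by linarith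
  qed
  finally have "norm (Z - Q) \<le> 2 * d" by (rule power2_le_imp_le) (simp add: d0)
  then have "infdist Z nonneg_stiefel \<le> 2 * d"
    using infdist_le[OF QS, of Z] by (simp add: dist_norm)
  then show "infdist Z nonneg_stiefel \<le> 2 * infdist Z nonneg_mats" by (simp add: d_def)
qed

theorem corollary3p5:
  assumes "CARD('n::finite) \<ge> CARD('r::finite)"
    and "CARD('n) = CARD('r) \<or> (CARD('n) > CARD('r) \<and> CARD('r) = 1)"
  shows "\<exists>\<kappa>>0. \<forall>Z::real^'r^'n. Z \<in> stiefel \<longrightarrow>
           infdist Z nonneg_stiefel \<le> \<kappa> * infdist Z nonneg_mats"
proof (cases "CARD('n) = CARD('r)")
  case True
  obtain \<delta> where "\<delta> > 0" and "\<forall>Z::real^'r^'n. Z \<in> stiefel \<longrightarrow> infdist Z nonneg_mats < \<delta> \<longrightarrow>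
               infdist Z nonneg_stiefel \<le> 4 * infdist Z nonneg_mats"
    using square_case[OF True] by blast
  then show ?thesis by (intro global_from_local[of \<delta> 4]) auto
next
  case False
  then have "CARD('r) = 1" using assms(2) by blast
  then show ?thesis by (intro global_from_local[of 1 2] col_case) auto
qed

end
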